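(* Let $\mathcal{A}$ be a visibly pushdown automaton with $m$ states over the pushdown alphabet $\Sigma$. Then the $\Sigma$-diameter of $\mathcal{A}$ is at most $2^{m^2}$; that is, for all states $p,q$ such that there exists a balanced word $u\in\Sigma^*$ with $p\xrightarrow{u}q$, there exists such a balanced word of length at most $2^{m^2}$.
   Context: Pushdown alphabet $\Sigma=\Sigma_+\cup\Sigma_-\cup\Sigma_=$ (push, pop, neutral symbols); a VPA pushes one stack symbol on each push symbol, pops one on each pop symbol, and does not touch the stack on neutral symbols. A word is balanced if #push − #pop $=0$ and every prefix has #push − #pop $\geq 0$. For balanced $u$, $p\xrightarrow{u}q$ means $(\sigma,p)\xrightarrow{u}(\sigma,q)$ for some (equivalently any) stack content $\sigma$. *)

theory Defs
  imports Main
begin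

datatype kind = Push | Pop | Neutral

text \<open>A visibly pushdown automaton (initial/final states are irrelevant for the
  diameter and are omitted). Push transitions (p,a,q,g): read push letter a in p,
  go to q and push g. Pop transitions (p,a,g,q): read pop letter a in p with g on
  top of the stack, pop g and go to q.\<close>
record ('s,'a,'g) vpa =
  states :: "'s set"
  stack_syms :: "'g set"
  push_tr :: "('s \<times> 'a \<times> 's \<times> 'g) set"
  pop_tr :: "('s \<times> 'a \<times> 'g \<times> 's) set"
  int_tr :: "('s \<times> 'a \<times> 's) set"

definition wf_vpa :: "('a \<Rightarrow> kind) \<Rightarrow> ('s,'a,'g) vpa \<Rightarrow> bool" where
  "wf_vpa kd A \<longleftrightarrow> finite (states A) \<and> finite (stack_syms A) \<and>
     (\<forall>(p,a,q,g)\<in>push_tr A. p \<in> states A \<and> q \<in> states A \<and> g \<in> stack_syms A \<and> kd a = Push) \<and>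
     (\<forall>(p,a,g,q)\<in>pop_tr A. p \<in> states A \<and> q \<in> states A \<and> g \<in> stack_syms A \<and> kd a = Pop) \<and>
     (\<forall>(p,a,q)\<in>int_tr A. p \<in> states A \<and> q \<in> states A \<and> kd a = Neutral)"

text \<open>Runs between configurations (stack, state); the head of the list is the top.\<close>
inductive run :: "('s,'a,'g) vpa \<Rightarrow> 'g list \<Rightarrow> 's \<Rightarrow> 'a list \<Rightarrow> 'g list \<Rightarrow> 's \<Rightarrow> bool"
  for A where
  run_nil: "run A \<sigma> p [] \<sigma> p"
| run_push: "(p,a,q,g) \<in> push_tr A \<Longrightarrow> run A (g # \<sigma>) q w \<sigma>' r \<Longrightarrow> run A \<sigma> p (a # w) \<sigma>' r"
| run_pop: "(p,a,g,q) \<in> pop_tr A \<Longrightarrow> run A \<sigma> q w \<sigma>' r \<Longrightarrow> run A (g # \<sigma>) p (a # w) \<sigma>' r"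
| run_int: "(p,a,q) \<in> int_tr A \<Longrightarrow> run A \<sigma> q w \<sigma>' r \<Longrightarrow> run A \<sigma> p (a # w) \<sigma>' r"

definition height :: "('a \<Rightarrow> kind) \<Rightarrow> 'a list \<Rightarrow> int" where
  "height kd w = int (length (filter (\<lambda>a. kd a = Push) w)) - int (length (filter (\<lambda>a. kd a = Pop) w))"

definition balanced :: "('a \<Rightarrow> kind) \<Rightarrow> 'a list \<Rightarrow> bool" where
  "balanced kd w \<longleftrightarrow> height kd w = 0 \<and> (\<forall>n \<le> length w. height kd (take n w) \<ge> 0)"

text \<open>p --u--> q for balanced u: from the empty stack back to the empty stack
  (equivalently from any stack \<sigma> to \<sigma>).\<close>
definition reach_bal :: "('a \<Rightarrow> kind) \<Rightarrow> ('s,'a,'g) vpa \<Rightarrow> 's \<Rightarrow> 'a list \<Rightarrow> 's \<Rightarrow> bool" where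
  "reach_bal kd A p u q \<longleftrightarrow> balanced kd u \<and> (\<exists>\<sigma>. run A \<sigma> p u \<sigma> q)"

end

theory Submission
  imports Defs
begin

lemma height_Nil[simp]: "height kd [] = 0" by (simp add: height_def)
lemma height_Cons: "height kd (c#w) = (case kd c of Push \<Rightarrow> 1 | Pop \<Rightarrow> -1 | Neutral \<Rightarrow> 0) + height kd w"
  by (cases "kd c") (simp_all add: height_def)
lemma height_append[simp]: "height kd (x@y) = height kd x + height kd y" by (simp add: height_def)

lemma wf_push: "wf_vpa kd A \<Longrightarrow> (p,a,q,g)\<in>push_tr A \<Longrightarrow> kd a = Push \<and> p \<in> states A \<and> q \<in> states A"
  by (auto simp: wf_vpa_def)
lemma wf_pop: "wf_vpa kd A \<Longrightarrow> (p,a,g,q)\<in>pop_tr A \<Longrightarrow> kd a = Pop \<and> p \<in> states A \<and> q \<in> states A"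
  by (auto simp: wf_vpa_def)
lemma wf_int: "wf_vpa kd A \<Longrightarrow> (p,a,q)\<in>int_tr A \<Longrightarrow> kd a = Neutral \<and> p \<in> states A \<and> q \<in> states A"
  by (auto simp: wf_vpa_def)

lemma run_len: assumes "run A \<sigma> p v \<sigma>' q" "wf_vpa kd A"
  shows "int (length \<sigma>') = int (length \<sigma>) + height kd v"
  using assms by induction (auto simp: height_Cons dest: wf_push wf_pop wf_int)

lemma run_suffix: assumes "run A \<sigma> p v \<sigma>' q" "wf_vpa kd A"
  shows "(\<forall>n\<le>length v. height kd (take n v) \<ge> - int k) \<Longrightarrow> \<exists>\<tau>. \<sigma>' = \<tau> @ drop k \<sigma>"
  using assms
proof (induction arbitrary: k)
  case (run_nil \<sigma> p)
  show ?case by (metis append_take_drop_id)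
next
  case (run_push p a q g \<sigma> w \<sigma>' r)
  have ka: "kd a = Push" using wf_push[OF run_push.prems(2) run_push.hyps(1)] by blast
  have "\<forall>n\<le>length w. height kd (take n w) \<ge> - int (Suc k)"
  proof (intro allI impI)
    fix n assume "n \<le> length w"
    then have "Suc n \<le> length (a#w)" by simp
    then have "height kd (take (Suc n) (a#w)) \<ge> - int k" using run_push.prems(1) by blast
    then show "height kd (take n w) \<ge> - int (Suc k)" using ka by (simp add: height_Cons)
  qed
  from run_push.IH[OF this run_push.prems(2)] show ?case by simp
next
  case (run_pop p a g q \<sigma> w \<sigma>' r)
  have ka: "kd a = Pop" using wf_pop[OF run_pop.prems(2) run_pop.hyps(1)] by blast
  have "height kd (take 1 (a#w)) \<ge> - int k" using run_pop.prems(1) by force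
  hence "k \<ge> 1" using ka by (simp add: height_Cons)
  then obtain k' where k: "k = Suc k'" by (cases k) auto
  have "\<forall>n\<le>length w. height kd (take n w) \<ge> - int k'"
  proof (intro allI impI)
    fix n assume "n \<le> length w"
    then have "Suc n \<le> length (a#w)" by simp
    then have "height kd (take (Suc n) (a#w)) \<ge> - int k" using run_pop.prems(1) by blast
    then show "height kd (take n w) \<ge> - int k'" using ka k by (simp add: height_Cons)
  qed
  from run_pop.IH[OF this run_pop.prems(2)] show ?case using k by simp
next
  case (run_int p a q \<sigma> w \<sigma>' r)
  have ka: "kd a = Neutral" using wf_int[OF run_int.prems(2) run_int.hyps(1)] by blast
  have "\<forall>n\<le>length w. height kd (take n w) \<ge> - int k"
  proof (intro allI impI)
    fix n assume "n \<le> length w"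
    then have "Suc n \<le> length (a#w)" by simp
    then have "height kd (take (Suc n) (a#w)) \<ge> - int k" using run_int.prems(1) by blast
    then show "height kd (take n w) \<ge> - int k" using ka by (simp add: height_Cons)
  qed
  from run_int.IH[OF this run_int.prems(2)] show ?case by simp
qed

lemma balanced_run: assumes "balanced kd v" "run A \<sigma> p v \<sigma>' q" "wf_vpa kd A"
  shows "\<sigma>' = \<sigma>"
proof -
  obtain \<tau> where t: "\<sigma>' = \<tau> @ \<sigma>"
    using run_suffix[OF assms(2,3), of 0] assms(1) by (auto simp: balanced_def)
  have "int (length \<sigma>') = int (length \<sigma>)" using run_len[OF assms(2,3)] assms(1)
    by (simp add: balanced_def)
  with t show ?thesis by simp
qed

lemma bal_Nil: "balanced kd []" by (simp add: balanced_def)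

lemma bal_app: assumes "balanced kd x" "balanced kd y" shows "balanced kd (x@y)"
  unfolding balanced_def
proof (intro conjI allI impI)
  show "height kd (x @ y) = 0" using assms by (simp add: balanced_def)
  fix n assume n: "n \<le> length (x@y)"
  show "height kd (take n (x@y)) \<ge> 0"
  proof (cases "n \<le> length x")
    case True then show ?thesis using assms by (simp add: balanced_def)
  next
    case False
    then have "take n (x@y) = x @ take (n - length x) y" by simp
    moreover have "n - length x \<le> length y" using n by simp
    ultimately show ?thesis using assms by (simp add: balanced_def)
  qed
qed

lemma bal_neutral: "kd c = Neutral \<Longrightarrow> balanced kd [c]"
  unfolding balanced_def by (auto simp: height_Cons le_Suc_eq)

lemma bal_wrap: assumes "kd a = Push" "kd b = Pop" "balanced kd v"
  shows "balanced kd (a # v @ [b])"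
  unfolding balanced_def
proof (intro conjI allI impI)
  show "height kd (a # v @ [b]) = 0" using assms by (simp add: balanced_def height_Cons)
  fix n assume n: "n \<le> length (a # v @ [b])"
  show "height kd (take n (a # v @ [b])) \<ge> 0"
  proof (cases n)
    case 0 then show ?thesis by simp
  next
    case (Suc n')
    show ?thesis
    proof (cases "n' \<le> length v")
      case True
      then show ?thesis using Suc assms by (simp add: balanced_def height_Cons)
    next
      case False
      then have "n' = Suc (length v)" using n Suc by simp
      then show ?thesis using Suc assms by (simp add: balanced_def height_Cons)
    qed
  qed
qed

lemma neg_split: "height kd x < 0 \<Longrightarrow> \<exists>v b w. x = v @ b # w \<and> kd b = Pop \<and> balanced kd v"
proof (induction "length x" arbitrary: x rule: less_induct)
  case less
  then obtain c x' where x: "x = c # x'" by (cases x) auto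
  consider "kd c = Push" | "kd c = Pop" | "kd c = Neutral" by (cases "kd c") auto
  then show ?case
  proof cases
    case 2
    then show ?thesis using x bal_Nil by fastforce
  next
    case 3
    then have "height kd x' < 0" using less.prems x by (simp add: height_Cons)
    then obtain v1 b1 w1 where h: "x' = v1 @ b1 # w1" "kd b1 = Pop" "balanced kd v1"
      using less.hyps[of x'] x by auto
    have "balanced kd ([c] @ v1)" using bal_app bal_neutral[of kd c, OF 3] h(3) by blast
    then show ?thesis using h x by (intro exI[of _ "c#v1"] exI[of _ b1] exI[of _ w1]) auto
  next
    case 1
    then have "height kd x' < 0" using less.prems x by (simp add: height_Cons)
    then obtain v1 b1 w1 where h: "x' = v1 @ b1 # w1" "kd b1 = Pop" "balanced kd v1"
      using less.hyps[of x'] x by auto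
    have "height kd w1 < 0" using h less.prems x 1 by (simp add: height_Cons balanced_def)
    moreover have "length w1 < length x" using h x by simp
    ultimately obtain v2 b2 w2 where h2: "w1 = v2 @ b2 # w2" "kd b2 = Pop" "balanced kd v2"
      using less.hyps by blast
    have "balanced kd ((c # v1 @ [b1]) @ v2)" using bal_app bal_wrap[OF 1 h(2,3)] h2(3) by blast
    then show ?thesis using h h2 x
      by (intro exI[of _ "(c # v1 @ [b1]) @ v2"] exI[of _ b2] exI[of _ w2]) auto
  qed
qed

lemma bal_push_split: assumes "balanced kd (a#r)" "kd a = Push"
  shows "\<exists>v b w. r = v@b#w \<and> kd b = Pop \<and> balanced kd v \<and> balanced kd w"
proof -
  have "height kd r < 0" using assms by (simp add: balanced_def height_Cons)
  then obtain v b w where h: "r = v@b#w" "kd b = Pop" "balanced kd v" using neg_split by blast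
  have "balanced kd w" unfolding balanced_def
  proof (intro conjI allI impI)
    show "height kd w = 0" using assms h by (simp add: balanced_def height_Cons)
    fix j assume j: "j \<le> length w"
    have n: "Suc (Suc (length v + j)) \<le> length (a#r)" using j h(1) by simp
    have "height kd (take (Suc (Suc (length v + j))) (a#r)) \<ge> 0"
      using assms(1) n unfolding balanced_def by blast
    then show "height kd (take j w) \<ge> 0" using h assms by (simp add: balanced_def height_Cons)
  qed
  then show ?thesis using h by blast
qed

lemma run_app: "run A \<sigma> p u \<sigma>1 s \<Longrightarrow> run A \<sigma>1 s v \<sigma>' r \<Longrightarrow> run A \<sigma> p (u@v) \<sigma>' r"
  by (induction rule: run.induct) (auto intro: run.intros)

lemma run_split: "run A \<sigma> p (u@v) \<sigma>' r \<Longrightarrow> \<exists>\<sigma>1 s. run A \<sigma> p u \<sigma>1 s \<and> run A \<sigma>1 s v \<sigma>' r"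
proof (induction u arbitrary: \<sigma> p)
  case Nil then show ?case by (auto intro: run.intros)
next
  case (Cons a u)
  from Cons.prems show ?case
    by (cases rule: run.cases) (fastforce dest: Cons.IH intro: run.intros)+
qed

definition step :: "('s,'a,'g) vpa \<Rightarrow> ('s\<times>'s) set \<Rightarrow> ('s\<times>'s) set" where
  "step A S = S \<union> {(p,r). \<exists>q. (p,q)\<in>S \<and> (q,r)\<in>S} \<union> {(p,q). \<exists>a. (p,a,q)\<in>int_tr A}
     \<union> {(p,q). \<exists>a p' g q' b. (p,a,p',g)\<in>push_tr A \<and> (p',q')\<in>S \<and> (q',b,g,q)\<in>pop_tr A}"

definition RR where "RR A i = (step A ^^ i) (Id_on (states A))"

lemma RR_Suc: "RR A (Suc i) = step A (RR A i)" by (simp add: RR_def)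
lemma RR_0: "RR A 0 = Id_on (states A)" by (simp add: RR_def)

lemma RR_mono: "i \<le> j \<Longrightarrow> RR A i \<subseteq> RR A j"
  by (rule lift_Suc_mono_le[of "RR A"]) (auto simp: RR_Suc step_def)

lemma RR_states: "wf_vpa kd A \<Longrightarrow> RR A i \<subseteq> states A \<times> states A"
proof (induction i)
  case 0 then show ?case by (auto simp: RR_0)
next
  case (Suc i)
  then show ?case by (auto simp: RR_Suc step_def dest: wf_push wf_pop wf_int)
qed

lemma RR_sound: "wf_vpa kd A \<Longrightarrow> (p,q) \<in> RR A i \<Longrightarrow>
   \<exists>u. balanced kd u \<and> (\<forall>\<sigma>. run A \<sigma> p u \<sigma> q) \<and> length u \<le> 2^(i+1)"
proof (induction i arbitrary: p q)
  case 0
  then show ?case by (intro exI[of _ "[]"]) (auto simp: RR_0 bal_Nil intro: run.intros)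
next
  case (Suc i)
  have pw: "(2::nat)^(i+1) \<ge> 2" by (simp add: self_le_power)
  have "(p,q) \<in> step A (RR A i)" using Suc.prems by (simp add: RR_Suc)
  then consider "(p,q) \<in> RR A i" | q' where "(p,q') \<in> RR A i" "(q',q) \<in> RR A i"
    | a where "(p,a,q)\<in>int_tr A"
    | a p' g q' b where "(p,a,p',g)\<in>push_tr A" "(p',q')\<in>RR A i" "(q',b,g,q)\<in>pop_tr A"
    unfolding step_def by blast
  then show ?case
  proof cases
    case 1
    then obtain u where "balanced kd u" "\<forall>\<sigma>. run A \<sigma> p u \<sigma> q" "length u \<le> 2^(i+1)"
      using Suc by blast
    then show ?thesis by (intro exI[of _ u]) auto
  next
    case 2
    obtain u1 where u1: "balanced kd u1" "\<forall>\<sigma>. run A \<sigma> p u1 \<sigma> q'" "length u1 \<le> 2^(i+1)"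
      using Suc 2 by blast
    obtain u2 where u2: "balanced kd u2" "\<forall>\<sigma>. run A \<sigma> q' u2 \<sigma> q" "length u2 \<le> 2^(i+1)"
      using Suc 2 by blast
    show ?thesis using u1 u2 bal_app[OF u1(1) u2(1)] run_app[OF u1(2)[rule_format] u2(2)[rule_format]]
      by (intro exI[of _ "u1@u2"]) auto
  next
    case 3
    then have "kd a = Neutral" using wf_int[OF Suc.prems(1) 3] by blast
    then show ?thesis using 3 pw bal_neutral
      by (intro exI[of _ "[a]"]) (auto intro: run.intros)
  next
    case 4
    have ka: "kd a = Push" using wf_push[OF Suc.prems(1) 4(1)] by blast
    have kb: "kd b = Pop" using wf_pop[OF Suc.prems(1) 4(3)] by blast
    obtain v where v: "balanced kd v" "\<forall>\<sigma>. run A \<sigma> p' v \<sigma> q'" "length v \<le> 2^(i+1)"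
      using Suc 4 by blast
    have "run A \<sigma> p (a # v @ [b]) \<sigma> q" for \<sigma>
    proof -
      have "run A (g#\<sigma>) q' [b] \<sigma> q" using 4 by (auto intro: run.intros)
      then have "run A (g#\<sigma>) p' (v @ [b]) \<sigma> q" using run_app[OF v(2)[rule_format]] by blast
      then show ?thesis using 4 by (auto intro: run.intros)
    qed
    moreover have "length (a # v @ [b]) \<le> 2^(Suc i + 1)"
    proof -
      have a: "(1::nat) \<le> 2^i" by simp
      have l0: "length v \<le> 2 * 2^i" using v(3) by simp
      have e: "(2::nat)^(Suc i + 1) = 4*2^i" by simp
      have l: "length (a#v@[b]) = length v + 2" by simp
      show ?thesis unfolding e l using a l0 by linarith
    qed
    ultimately show ?thesis using bal_wrap[OF ka kb v(1)] by blast
  qed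
qed

lemma RR_complete: "wf_vpa kd A \<Longrightarrow> p \<in> states A \<Longrightarrow> balanced kd u \<Longrightarrow> run A \<sigma> p u \<sigma> q \<Longrightarrow>
   \<exists>i. (p,q) \<in> RR A i"
proof (induction "length u" arbitrary: u p q \<sigma> rule: less_induct)
  case less
  note wf = less.prems(1)
  have IH: "\<And>u' p' q' \<sigma>'. length u' < length u \<Longrightarrow> p' \<in> states A \<Longrightarrow> balanced kd u' \<Longrightarrow>
     run A \<sigma>' p' u' \<sigma>' q' \<Longrightarrow> \<exists>i. (p',q') \<in> RR A i"
    using less.hyps wf by blast
  show ?case
  proof (cases u)
    case Nil
    then have "p = q" using less.prems(4) by (auto elim: run.cases)
    then show ?thesis using less.prems(2) by (intro exI[of _ 0]) (auto simp: RR_0)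
  next
    case (Cons a r)
    consider "kd a = Push" | "kd a = Pop" | "kd a = Neutral" by (cases "kd a") auto
    then show ?thesis
    proof cases
      case 2
      have "1 \<le> length u" using Cons by simp
      then have "height kd (take 1 u) \<ge> 0" using less.prems(3) unfolding balanced_def by blast
      then show ?thesis using 2 Cons by (simp add: height_Cons)
    next
      case 3
      from less.prems(4) Cons obtain q' where q': "(p,a,q')\<in>int_tr A" "run A \<sigma> q' r \<sigma> q"
        by (cases rule: run.cases) (auto dest: wf_push[OF wf] wf_pop[OF wf] simp: 3)
      have qs: "q' \<in> states A" using wf_int[OF wf q'(1)] by blast
      have br: "balanced kd r" unfolding balanced_def
      proof (intro conjI allI impI)
        show "height kd r = 0" using less.prems(3) Cons 3 by (simp add: balanced_def height_Cons)
        fix n assume "n \<le> length r"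
        then have "Suc n \<le> length u" using Cons by simp
        then have "height kd (take (Suc n) u) \<ge> 0" using less.prems(3) unfolding balanced_def by blast
        then show "height kd (take n r) \<ge> 0" using Cons 3 by (simp add: height_Cons)
      qed
      obtain j where j: "(q',q) \<in> RR A j" using IH[of r q' \<sigma> q] Cons wf qs br q'(2) by auto
      have "(p,q') \<in> RR A (Suc 0)" unfolding RR_Suc step_def using q'(1) by blast
      then have "(p,q') \<in> RR A (max j (Suc 0))" "(q',q) \<in> RR A (max j (Suc 0))"
        using j RR_mono[of "Suc 0" "max j (Suc 0)" A] RR_mono[of j "max j (Suc 0)" A] by auto
      then have "(p,q) \<in> RR A (Suc (max j (Suc 0)))" unfolding RR_Suc[of A "max j (Suc 0)"] step_def by blast
      then show ?thesis by blast
    next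
      case 1
      from less.prems(4) Cons obtain p' g where pg: "(p,a,p',g)\<in>push_tr A" "run A (g#\<sigma>) p' r \<sigma> q"
        by (cases rule: run.cases) (auto dest: wf_int[OF wf] wf_pop[OF wf] simp: 1)
      have ps: "p' \<in> states A" using wf_push[OF wf pg(1)] by blast
      obtain v b w where s: "r = v@b#w" "kd b = Pop" "balanced kd v" "balanced kd w"
        using bal_push_split[of kd a r] less.prems(3) Cons 1 by blast
      obtain \<sigma>1 q' where s1: "run A (g#\<sigma>) p' v \<sigma>1 q'" "run A \<sigma>1 q' (b#w) \<sigma> q"
        using run_split[of A "g#\<sigma>" p' v "b#w" \<sigma> q] pg(2) s(1) by auto
      have "\<sigma>1 = g#\<sigma>" using balanced_run[OF s(3) s1(1) wf] .
      with s1(2) obtain q'' where q'': "(q',b,g,q'')\<in>pop_tr A" "run A \<sigma> q'' w \<sigma> q"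
        by (cases rule: run.cases) (auto dest: wf_int[OF wf] wf_push[OF wf] simp: s(2))
      have qs: "q'' \<in> states A" using wf_pop[OF wf q''(1)] by blast
      obtain i1 where i1: "(p',q') \<in> RR A i1"
        using IH[of v p' "g#\<sigma>" q'] Cons s wf ps s1(1) \<open>\<sigma>1 = g#\<sigma>\<close> by auto
      obtain i2 where i2: "(q'',q) \<in> RR A i2"
        using IH[of w q'' \<sigma> q] Cons s wf qs q''(2) by auto
      define M where "M = max i1 i2"
      have "(p',q') \<in> RR A M" "(q'',q) \<in> RR A M"
        using i1 i2 RR_mono[of i1 M A] RR_mono[of i2 M A] by (auto simp: M_def)
      then have 1: "(p,q'') \<in> RR A (Suc M)"
        using pg(1) q''(1) unfolding RR_Suc step_def by blast
      have 2: "(q'',q) \<in> RR A (Suc M)" using \<open>(q'',q) \<in> RR A M\<close> unfolding RR_Suc step_def by blast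
      have "(p,q) \<in> RR A (Suc (Suc M))" using 1 2 unfolding RR_Suc[of A "Suc M"] step_def by blast
      then show ?thesis by blast
    qed
  qed
qed

theorem fact3:
  fixes kd :: "'a \<Rightarrow> kind" and A :: "('s,'a,'g) vpa" and m :: nat
  assumes "wf_vpa kd A" and "card (states A) = m"
    and "p \<in> states A" and "q \<in> states A"
    and "\<exists>u. reach_bal kd A p u q"
  shows "\<exists>u. reach_bal kd A p u q \<and> length u \<le> 2 ^ (m ^ 2)"
proof -
  note wf = assms(1)
  have fin: "finite (states A)" using wf by (simp add: wf_vpa_def)
  have "card (states A) > 0" using assms(3) fin card_gt_0_iff by blast
  then have m1: "m \<ge> 1" using assms(2) by simp
  have finS: "finite (states A \<times> states A)" using fin by simp
  have finR: "finite (RR A i)" for i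
    using RR_states[OF wf] finS finite_subset by blast
  have cardS: "card (states A \<times> states A) = m^2"
    using assms(2) card_cartesian_product[of "states A" "states A"] by (simp add: power2_eq_square)
  have cnt: "(\<forall>k<n. RR A k \<noteq> RR A (Suc k)) \<Longrightarrow> card (RR A n) \<ge> n + 1" for n
  proof (induction n)
    case 0
    have "(p,p) \<in> RR A 0" using assms(3) by (simp add: RR_0 Id_on_def)
    then have "RR A 0 \<noteq> {}" by blast
    then have "card (RR A 0) > 0" using finR[of 0] card_gt_0_iff by blast
    then show ?case by simp
  next
    case (Suc n)
    have "RR A n \<subseteq> RR A (Suc n)" using RR_mono[of n "Suc n" A] by simp
    moreover have "RR A n \<noteq> RR A (Suc n)" using Suc.prems by simp
    ultimately have "RR A n \<subset> RR A (Suc n)" by blast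
    then have "card (RR A n) < card (RR A (Suc n))" using finR psubset_card_mono by blast
    moreover have "card (RR A n) \<ge> n + 1" using Suc.IH Suc.prems by simp
    ultimately show ?case by simp
  qed
  have "\<exists>k<m^2. RR A k = RR A (Suc k)"
  proof (rule ccontr)
    assume "\<not> ?thesis"
    then have "\<forall>k<m^2. RR A k \<noteq> RR A (Suc k)" by blast
    then have "card (RR A (m^2)) \<ge> m^2 + 1" by (rule cnt)
    moreover have "card (RR A (m^2)) \<le> card (states A \<times> states A)"
      by (rule card_mono[OF finS RR_states[OF wf]])
    ultimately show False using cardS by simp
  qed
  then obtain k where k: "k < m^2" "RR A k = RR A (Suc k)" by blast
  define N where "N = m^2 - 1"
  have kN: "k \<le> N" using k(1) N_def by simp
  have stab: "k \<le> j \<Longrightarrow> RR A j = RR A k" for j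
  proof (induction j rule: dec_induct)
    case base then show ?case by simp
  next
    case (step j)
    have "RR A (Suc j) = step A (RR A j)" by (rule RR_Suc)
    also have "\<dots> = step A (RR A k)" using step.IH by simp
    also have "\<dots> = RR A (Suc k)" by (rule RR_Suc[symmetric])
    finally show ?case using k(2) by simp
  qed
  have all: "RR A i \<subseteq> RR A N" for i
  proof (cases "i \<le> N")
    case True then show ?thesis by (rule RR_mono)
  next
    case False
    then have "k \<le> i" using kN by simp
    then have "RR A i = RR A k" by (rule stab)
    then show ?thesis using RR_mono[OF kN] by simp
  qed
  obtain u0 \<sigma> where u0: "balanced kd u0" "run A \<sigma> p u0 \<sigma> q"
    using assms(5) unfolding reach_bal_def by blast
  obtain i where "(p,q) \<in> RR A i" using RR_complete[OF wf assms(3) u0] by blast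
  then have "(p,q) \<in> RR A N" using all by blast
  then obtain u where u: "balanced kd u" "\<forall>\<sigma>. run A \<sigma> p u \<sigma> q" "length u \<le> 2^(N+1)"
    using RR_sound[OF wf] by blast
  have "N + 1 = m^2" using m1 N_def by (simp add: Suc_leI)
  then have "length u \<le> 2 ^ (m^2)" using u(3) by simp
  moreover have "reach_bal kd A p u q" unfolding reach_bal_def using u(1,2) by blast
  ultimately show ?thesis by blast
qed

end
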